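(* Let $G$ be a locally compact group acting properly on a space $X$, and let $Y$ be any $G$-space. Let $S$ be a closed small subset of $X$ and let $f:S\to Y$ be a continuous map such that whenever $s\in S$ and $g\in G$ satisfy $gs\in S$, one has $f(gs)=gf(s)$. Then $f$ extends uniquely to a continuous equivariant map $F:G(S)\to Y$ (i.e. $F(gx)=gF(x)$ for all $g\in G$, $x\in G(S)$).
   Context: All spaces are completely regular Hausdorff. A $G$-space is a space $X$ with a continuous action $G\times X\to X$, $(g,x)\mapsto gx$, with $ex=x$ and $(gh)x=g(hx)$. For $S\subset X$, $G(S)=\{gs\mid g\in G,s\in S\}$. For $U,V\subset X$ the transporter is $\langle U,V\rangle=\{g\in G\mid gU\cap V\neq\emptyset\}$; $U$ and $V$ are thin relative to each other if $\langle U,V\rangle$ has compact closure in $G$. A subset $U\subset X$ is small if every point of $X$ has a neighborhood thin relative to $U$. For $G$ locally compact, a $G$-space $X$ is proper (the action is proper) if every point of $X$ has a small neighborhood. *)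

theory Defs
  imports "HOL-Analysis.Analysis" "HOL-Algebra.Group"
begin

definition crH_space :: "'a topology \<Rightarrow> bool" where
  "crH_space T \<longleftrightarrow> completely_regular_space T \<and> Hausdorff_space T"

definition topological_group :: "('g, 'm) monoid_scheme \<Rightarrow> 'g topology \<Rightarrow> bool" where
  "topological_group G T \<longleftrightarrow> group G \<and> topspace T = carrier G \<and>
     continuous_map (prod_topology T T) T (\<lambda>(a, b). a \<otimes>\<^bsub>G\<^esub> b) \<and>
     continuous_map T T (\<lambda>a. inv\<^bsub>G\<^esub> a)"

definition G_space :: "('g, 'm) monoid_scheme \<Rightarrow> 'g topology \<Rightarrow> 'x topology \<Rightarrow> ('g \<Rightarrow> 'x \<Rightarrow> 'x) \<Rightarrow> bool" where
  "G_space G TG TX act \<longleftrightarrow>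
     continuous_map (prod_topology TG TX) TX (\<lambda>(g, x). act g x) \<and>
     (\<forall>x\<in>topspace TX. act \<one>\<^bsub>G\<^esub> x = x) \<and>
     (\<forall>g\<in>carrier G. \<forall>h\<in>carrier G. \<forall>x\<in>topspace TX. act (g \<otimes>\<^bsub>G\<^esub> h) x = act g (act h x))"

definition orbit_set :: "('g, 'm) monoid_scheme \<Rightarrow> ('g \<Rightarrow> 'x \<Rightarrow> 'x) \<Rightarrow> 'x set \<Rightarrow> 'x set" where
  "orbit_set G act S = {act g s | g s. g \<in> carrier G \<and> s \<in> S}"

definition transporter :: "('g, 'm) monoid_scheme \<Rightarrow> ('g \<Rightarrow> 'x \<Rightarrow> 'x) \<Rightarrow> 'x set \<Rightarrow> 'x set \<Rightarrow> 'g set" where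
  "transporter G act U V = {g \<in> carrier G. act g ` U \<inter> V \<noteq> {}}"

definition thin_rel :: "('g, 'm) monoid_scheme \<Rightarrow> 'g topology \<Rightarrow> ('g \<Rightarrow> 'x \<Rightarrow> 'x) \<Rightarrow> 'x set \<Rightarrow> 'x set \<Rightarrow> bool" where
  "thin_rel G TG act U V \<longleftrightarrow> compactin TG (TG closure_of (transporter G act U V))"

definition nbhd :: "'x topology \<Rightarrow> 'x \<Rightarrow> 'x set \<Rightarrow> bool" where
  "nbhd TX x N \<longleftrightarrow> N \<subseteq> topspace TX \<and> (\<exists>W. openin TX W \<and> x \<in> W \<and> W \<subseteq> N)"

definition small_set :: "('g, 'm) monoid_scheme \<Rightarrow> 'g topology \<Rightarrow> 'x topology \<Rightarrow> ('g \<Rightarrow> 'x \<Rightarrow> 'x) \<Rightarrow> 'x set \<Rightarrow> bool" where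
  "small_set G TG TX act U \<longleftrightarrow> (\<forall>x\<in>topspace TX. \<exists>N. nbhd TX x N \<and> thin_rel G TG act N U)"

definition proper_action :: "('g, 'm) monoid_scheme \<Rightarrow> 'g topology \<Rightarrow> 'x topology \<Rightarrow> ('g \<Rightarrow> 'x \<Rightarrow> 'x) \<Rightarrow> bool" where
  "proper_action G TG TX act \<longleftrightarrow> (\<forall>x\<in>topspace TX. \<exists>N. nbhd TX x N \<and> small_set G TG TX act N)"

end

theory Submission
  imports Defs
begin

theorem theorem4p1:
  fixes G :: "('g, 'm) monoid_scheme" and TG :: "'g topology"
    and TX :: "'x topology" and actX :: "'g \<Rightarrow> 'x \<Rightarrow> 'x"
    and TY :: "'y topology" and actY :: "'g \<Rightarrow> 'y \<Rightarrow> 'y"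
    and S :: "'x set" and f :: "'x \<Rightarrow> 'y"
  assumes "topological_group G TG" and "crH_space TG" and "locally_compact_space TG"
    and "crH_space TX" and "G_space G TG TX actX" and "proper_action G TG TX actX"
    and "crH_space TY" and "G_space G TG TY actY"
    and "closedin TX S" and "small_set G TG TX actX S"
    and "continuous_map (subtopology TX S) TY f"
    and "\<And>s g. s \<in> S \<Longrightarrow> g \<in> carrier G \<Longrightarrow> actX g s \<in> S \<Longrightarrow> f (actX g s) = actY g (f s)"
  shows "\<exists>F. continuous_map (subtopology TX (orbit_set G actX S)) TY F
           \<and> (\<forall>s\<in>S. F s = f s)
           \<and> (\<forall>g\<in>carrier G. \<forall>x\<in>orbit_set G actX S. F (actX g x) = actY g (F x))
           \<and> (\<forall>F'. continuous_map (subtopology TX (orbit_set G actX S)) TY F'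
                 \<and> (\<forall>s\<in>S. F' s = f s)
                 \<and> (\<forall>g\<in>carrier G. \<forall>x\<in>orbit_set G actX S. F' (actX g x) = actY g (F' x))
                 \<longrightarrow> (\<forall>x\<in>orbit_set G actX S. F' x = F x))"
proof -
  note TGd = assms(1)[unfolded topological_group_def]
  have grp: "group G" and TGc: "topspace TG = carrier G"
    and mulc: "continuous_map (prod_topology TG TG) TG (\<lambda>(a, b). a \<otimes>\<^bsub>G\<^esub> b)"
    and invc: "continuous_map TG TG (\<lambda>a. inv\<^bsub>G\<^esub> a)" using TGd by auto
  interpret group G by (rule grp)
  note GX = assms(5)[unfolded G_space_def]
  note GY = assms(8)[unfolded G_space_def]
  have aXc: "continuous_map (prod_topology TG TX) TX (\<lambda>(g, x). actX g x)"
    and aX1: "\<And>x. x \<in> topspace TX \<Longrightarrow> actX \<one>\<^bsub>G\<^esub> x = x"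
    and aXm: "\<And>g h x. g \<in> carrier G \<Longrightarrow> h \<in> carrier G \<Longrightarrow> x \<in> topspace TX \<Longrightarrow> actX (g \<otimes>\<^bsub>G\<^esub> h) x = actX g (actX h x)"
    using GX by auto
  have aYc: "continuous_map (prod_topology TG TY) TY (\<lambda>(g, x). actY g x)"
    and aY1: "\<And>x. x \<in> topspace TY \<Longrightarrow> actY \<one>\<^bsub>G\<^esub> x = x"
    and aYm: "\<And>g h x. g \<in> carrier G \<Longrightarrow> h \<in> carrier G \<Longrightarrow> x \<in> topspace TY \<Longrightarrow> actY (g \<otimes>\<^bsub>G\<^esub> h) x = actY g (actY h x)"
    using GY by auto
  have aXt: "\<And>g x. g \<in> carrier G \<Longrightarrow> x \<in> topspace TX \<Longrightarrow> actX g x \<in> topspace TX"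
    using continuous_map_funspace[OF aXc] TGc by (fastforce simp: Pi_iff)
  have aYt: "\<And>g x. g \<in> carrier G \<Longrightarrow> x \<in> topspace TY \<Longrightarrow> actY g x \<in> topspace TY"
    using continuous_map_funspace[OF aYc] TGc by (fastforce simp: Pi_iff)
  have StX: "S \<subseteq> topspace TX" using assms(9) closedin_subset by blast
  have fS: "\<And>s. s \<in> S \<Longrightarrow> f s \<in> topspace TY"
    using continuous_map_funspace[OF assms(11)] StX by (auto simp: Pi_iff)
  have aXinv: "\<And>g x. g \<in> carrier G \<Longrightarrow> x \<in> topspace TX \<Longrightarrow> actX (inv\<^bsub>G\<^esub> g) (actX g x) = x"
    by (metis aX1 aXm inv_closed l_inv)
  have aYinv: "\<And>g x. g \<in> carrier G \<Longrightarrow> x \<in> topspace TY \<Longrightarrow> actY (inv\<^bsub>G\<^esub> g) (actY g x) = x"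
    by (metis aY1 aYm inv_closed l_inv)
  define Orb where "Orb = orbit_set G actX S"
  define F where "F y = (let g = (SOME g. g \<in> carrier G \<and> actX g y \<in> S) in actY (inv\<^bsub>G\<^esub> g) (f (actX g y)))" for y
  have indep: "actY (inv\<^bsub>G\<^esub> g) (f (actX g y)) = actY (inv\<^bsub>G\<^esub> h) (f (actX h y))"
    if "y \<in> topspace TX" "g \<in> carrier G" "h \<in> carrier G" "actX g y \<in> S" "actX h y \<in> S" for y g h
  proof -
    define s where "s = actX g y"
    have s: "s \<in> S" using that s_def by simp
    have "actX (h \<otimes>\<^bsub>G\<^esub> inv\<^bsub>G\<^esub> g) s = actX h y"
      using that s_def aXm aXinv aXt by simp
    hence "f (actX h y) = actY (h \<otimes>\<^bsub>G\<^esub> inv\<^bsub>G\<^esub> g) (f s)"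
      using assms(12)[of s "h \<otimes>\<^bsub>G\<^esub> inv\<^bsub>G\<^esub> g"] s that by auto
    hence "actY (inv\<^bsub>G\<^esub> h) (f (actX h y)) = actY (inv\<^bsub>G\<^esub> h) (actY h (actY (inv\<^bsub>G\<^esub> g) (f s)))"
      using aYm that fS s by simp
    also have "\<dots> = actY (inv\<^bsub>G\<^esub> g) (f s)" using aYinv aYt fS s that by simp
    finally show ?thesis using s_def by simp
  qed
  have Fval: "F y = actY (inv\<^bsub>G\<^esub> h) (f (actX h y))"
    if "y \<in> topspace TX" "h \<in> carrier G" "actX h y \<in> S" for y h
  proof -
    have ex: "\<exists>g. g \<in> carrier G \<and> actX g y \<in> S" using that by blast
    show ?thesis unfolding F_def Let_def
      by (rule indep[OF that(1) _ that(2) _ that(3)]; (metis (mono_tags, lifting) someI_ex[OF ex]))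
  qed
  have Ochar: "y \<in> Orb \<longleftrightarrow> y \<in> topspace TX \<and> (\<exists>h \<in> carrier G. actX h y \<in> S)" for y
  proof
    assume "y \<in> Orb"
    then obtain g s where gs: "g \<in> carrier G" "s \<in> S" "y = actX g s"
      unfolding Orb_def orbit_set_def by blast
    thus "y \<in> topspace TX \<and> (\<exists>h \<in> carrier G. actX h y \<in> S)"
      using aXt aXinv StX by (metis inv_closed subsetD)
  next
    assume "y \<in> topspace TX \<and> (\<exists>h \<in> carrier G. actX h y \<in> S)"
    then obtain h where "y \<in> topspace TX" "h \<in> carrier G" "actX h y \<in> S" by blast
    hence "y = actX (inv\<^bsub>G\<^esub> h) (actX h y)" using aXinv by simp
    thus "y \<in> Orb" unfolding Orb_def orbit_set_def using \<open>h \<in> carrier G\<close> \<open>actX h y \<in> S\<close> by blast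
  qed
  have FS: "\<forall>s\<in>S. F s = f s"
  proof
    fix s assume s: "s \<in> S"
    thus "F s = f s" using Fval[of s "\<one>\<^bsub>G\<^esub>"] StX aX1 aY1 fS by auto
  qed
  have Feq: "\<forall>g\<in>carrier G. \<forall>x\<in>Orb. F (actX g x) = actY g (F x)"
  proof (intro ballI)
    fix g x assume g: "g \<in> carrier G" and x: "x \<in> Orb"
    then obtain h where h: "h \<in> carrier G" "actX h x \<in> S" and xt: "x \<in> topspace TX"
      using Ochar by blast
    have "actX (h \<otimes>\<^bsub>G\<^esub> inv\<^bsub>G\<^esub> g) (actX g x) = actX h x" using aXm aXinv aXt g h xt by simp
    hence "F (actX g x) = actY (inv\<^bsub>G\<^esub> (h \<otimes>\<^bsub>G\<^esub> inv\<^bsub>G\<^esub> g)) (f (actX h x))"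
      using Fval[of "actX g x" "h \<otimes>\<^bsub>G\<^esub> inv\<^bsub>G\<^esub> g"] aXt g h xt by simp
    also have "\<dots> = actY (g \<otimes>\<^bsub>G\<^esub> inv\<^bsub>G\<^esub> h) (f (actX h x))"
      using g h by (simp add: inv_mult_group)
    also have "\<dots> = actY g (F x)" using aYm g h fS Fval xt by simp
    finally show "F (actX g x) = actY g (F x)" .
  qed
  have cont: "continuous_map (subtopology TX Orb) TY F"
  proof -
    have OrbT: "Orb \<subseteq> topspace TX" using Ochar by blast
    have Fmap: "F y \<in> topspace TY" if "y \<in> Orb" for y
    proof -
      obtain h where h: "h \<in> carrier G" "actX h y \<in> S" "y \<in> topspace TX" using Ochar \<open>y \<in> Orb\<close> by blast
      thus ?thesis using Fval fS aYt by simp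
    qed
    have "topcontinuous_at (subtopology TX Orb) TY F x" if x: "x \<in> Orb" for x
      unfolding topcontinuous_at_def
    proof (intro conjI allI impI)
      show "x \<in> topspace (subtopology TX Orb)" using x OrbT by auto
      show "F \<in> topspace (subtopology TX Orb) \<rightarrow> topspace TY" using Fmap by (auto simp: Pi_iff)
      fix V assume V: "openin TY V \<and> F x \<in> V"
      have xt: "x \<in> topspace TX" using x OrbT by auto
      obtain N where N: "nbhd TX x N" "thin_rel G TG actX N S"
        using assms(10) xt unfolding small_set_def by blast
      obtain W where W: "openin TX W" "x \<in> W" "W \<subseteq> N" using N(1) unfolding nbhd_def by blast
      define K where "K = TG closure_of (transporter G actX N S)"
      have Kc: "compactin TG K" using N(2) unfolding thin_rel_def K_def by simp
      have KG: "K \<subseteq> carrier G" unfolding K_def TGc[symmetric] by (rule closure_of_subset_topspace)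
      have trK: "h \<in> K" if "h \<in> carrier G" "y \<in> W" "actX h y \<in> S" for h y
      proof -
        have "actX h y \<in> actX h ` N" using that(2) W(3) by (intro imageI) (rule subsetD)
        hence "actX h ` N \<inter> S \<noteq> {}" using that(3) by (metis IntI empty_iff)
        hence "h \<in> transporter G actX N S" unfolding transporter_def using that(1) by simp
        moreover have "transporter G actX N S \<subseteq> topspace TG" unfolding transporter_def TGc by auto
        ultimately show ?thesis unfolding K_def using closure_of_subset by (metis subsetD)
      qed
      have WT: "W \<subseteq> topspace TX" using W(1) openin_subset by blast
      define Z where "Z = prod_topology (subtopology TG K) (subtopology TX W)"
      have Zeq: "Z = subtopology (prod_topology TG TX) (K \<times> W)"
        unfolding Z_def by (simp add: subtopology_Times)
      have topZ: "topspace Z = K \<times> W" using KG TGc WT unfolding Z_def by auto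
      define P where "P = {p \<in> topspace Z. (\<lambda>(g, x). actX g x) p \<in> S}"
      have Pcl: "closedin Z P" unfolding P_def
        by (rule closedin_continuous_map_preimage[OF _ assms(9)])
           (simp add: Zeq continuous_map_from_subtopology[OF aXc])
      have PKW: "P \<subseteq> K \<times> W" using topZ P_def by auto
      define Z' where "Z' = subtopology (prod_topology TG TX) P"
      have Z'eq: "subtopology Z P = Z'" unfolding Zeq Z'_def subtopology_subtopology
        using PKW by (simp add: Int_absorb1)
      have topZ': "topspace Z' = P" using PKW KG TGc WT unfolding Z'_def by auto
      define phi where "phi = (\<lambda>p. actY (inv\<^bsub>G\<^esub> (fst p)) (f (actX (fst p) (snd p))))"
      have c1: "continuous_map Z' TX (\<lambda>(g, x). actX g x)"
        unfolding Z'_def by (rule continuous_map_from_subtopology[OF aXc])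
      have c2: "continuous_map Z' (subtopology TX S) (\<lambda>(g, x). actX g x)"
        by (rule continuous_map_into_subtopology[OF c1]) (use topZ' P_def in auto)
      have c3: "continuous_map Z' TY (f \<circ> (\<lambda>(g, x). actX g x))"
        by (rule continuous_map_compose[OF c2 assms(11)])
      have c4: "continuous_map Z' TG fst"
        unfolding Z'_def by (rule continuous_map_from_subtopology[OF continuous_map_fst])
      have c5: "continuous_map Z' TG ((\<lambda>a. inv\<^bsub>G\<^esub> a) \<circ> fst)"
        by (rule continuous_map_compose[OF c4 invc])
      have c6: "continuous_map Z' (prod_topology TG TY) (\<lambda>p. (((\<lambda>a. inv\<^bsub>G\<^esub> a) \<circ> fst) p, (f \<circ> (\<lambda>(g, x). actX g x)) p))"
        by (rule continuous_map_pairedI[OF c5 c3])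
      have c7: "continuous_map Z' TY ((\<lambda>(g, x). actY g x) \<circ> (\<lambda>p. (((\<lambda>a. inv\<^bsub>G\<^esub> a) \<circ> fst) p, (f \<circ> (\<lambda>(g, x). actX g x)) p)))"
        by (rule continuous_map_compose[OF c6 aYc])
      have "((\<lambda>(g, x). actY g x) \<circ> (\<lambda>p. (((\<lambda>a. inv\<^bsub>G\<^esub> a) \<circ> fst) p, (f \<circ> (\<lambda>(g, x). actX g x)) p))) = phi"
        unfolding phi_def by (auto simp: fun_eq_iff split: prod.splits)
      with c7 have cphi: "continuous_map Z' TY phi" by simp
      define C where "C = topspace TY - V"
      have Ccl: "closedin TY C" unfolding C_def using V by (intro closedin_diff closedin_topspace) auto
      define Q where "Q = {p \<in> topspace Z'. phi p \<in> C}"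
      have "closedin Z' Q" unfolding Q_def by (rule closedin_continuous_map_preimage[OF cphi Ccl])
      hence "closedin (subtopology Z P) Q" using Z'eq by simp
      hence Qcl: "closedin Z Q" by (rule closedin_trans_full[OF _ Pcl])
      have "compact_space (subtopology TG K)" using Kc compact_space_subtopology by blast
      hence "closed_map Z (subtopology TX W) snd"
        unfolding Z_def by (rule Abstract_Topological_Spaces.closed_map_snd)
      hence sQ: "closedin (subtopology TX W) (snd ` Q)" using Qcl closed_map_def by blast
      have topW: "topspace (subtopology TX W) = W" using WT by auto
      have "openin (subtopology TX W) (topspace (subtopology TX W) - snd ` Q)"
        using sQ unfolding closedin_def by (elim conjE)
      hence "openin (subtopology TX W) (W - snd ` Q)" by (simp only: topW)
      hence U0: "openin TX (W - snd ` Q)" using openin_trans_full W(1) by blast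
      show "\<exists>U. openin (subtopology TX Orb) U \<and> x \<in> U \<and> (\<forall>y\<in>U. F y \<in> V)"
      proof (intro exI conjI ballI)
        show "openin (subtopology TX Orb) ((W - snd ` Q) \<inter> Orb)"
          using U0 openin_subtopology by blast
        have "x \<notin> snd ` Q"
        proof
          assume "x \<in> snd ` Q"
          then obtain h where hQ: "(h, x) \<in> Q" by force
          hence hP: "(h, x) \<in> P" using Q_def topZ' by auto
          hence hK: "h \<in> K" and hS: "actX h x \<in> S" using P_def topZ by auto
          have "phi (h, x) = F x" unfolding phi_def using Fval[of x h] xt hK KG hS by auto
          thus False using hQ V Q_def C_def by auto
        qed
        thus "x \<in> (W - snd ` Q) \<inter> Orb" using W(2) x by blast
      next
        fix y assume y: "y \<in> (W - snd ` Q) \<inter> Orb"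
        then obtain h where h: "h \<in> carrier G" "actX h y \<in> S" and yt: "y \<in> topspace TX"
          using Ochar by blast
        have hK: "h \<in> K" using trK h y by blast
        have hP: "(h, y) \<in> P" using P_def topZ hK y h by auto
        have "(h, y) \<notin> Q" using y by force
        hence "phi (h, y) \<notin> C" using hP topZ' Q_def by auto
        moreover have "phi (h, y) = F y" unfolding phi_def using Fval[of y h] yt h by auto
        moreover have "F y \<in> topspace TY" using Fmap y by blast
        ultimately show "F y \<in> V" using C_def by auto
      qed
    qed
    hence "\<forall>x \<in> topspace (subtopology TX Orb). topcontinuous_at (subtopology TX Orb) TY F x"
      by simp
    thus ?thesis by (simp only: continuous_map_eq_topcontinuous_at)
  qed
  show ?thesis
  proof (intro exI conjI allI impI)
    show "continuous_map (subtopology TX (orbit_set G actX S)) TY F" using cont Orb_def by simp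
    show "\<forall>s\<in>S. F s = f s" by (rule FS)
    show "\<forall>g\<in>carrier G. \<forall>x\<in>orbit_set G actX S. F (actX g x) = actY g (F x)" using Feq Orb_def by simp
  next
    fix F' assume F': "continuous_map (subtopology TX (orbit_set G actX S)) TY F'
                 \<and> (\<forall>s\<in>S. F' s = f s)
                 \<and> (\<forall>g\<in>carrier G. \<forall>x\<in>orbit_set G actX S. F' (actX g x) = actY g (F' x))"
    show "\<forall>x\<in>orbit_set G actX S. F' x = F x"
    proof
      fix x assume "x \<in> orbit_set G actX S"
      then obtain g s where gs: "g \<in> carrier G" "s \<in> S" "x = actX g s"
        unfolding orbit_set_def by blast
      have sO: "s \<in> Orb" using Ochar gs StX aX1 by (metis one_closed subsetD)
      show "F' x = F x" using F' Feq FS gs sO Orb_def by auto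
    qed
  qed
qed

end
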